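(* Let $p\ge 2$ be an integer. For every integer $n\ge 10^{p-1}+9$ and all $a,b\in\{0,\dots,9\}$ with $a<b$, we have $P_{(a,n,p)}>P_{(b,n,p)}$.
   Context: For an integer $x\ge 10^{p-1}$, the "$p$-th digit of $x$" is the $p$-th digit of its decimal expansion counted from the left. For $d\in\{0,\dots,9\}$ and $m\ge 10^{p-1}$, let $N_d(m)$ be the number of integers $x$ with $10^{p-1}\le x\le m$ whose $p$-th digit is $d$. For $n\ge 10^{p-1}$, $$P_{(d,n,p)}=\frac{1}{n+1-10^{p-1}}\sum_{m=10^{p-1}}^{n}\frac{N_d(m)}{m+1-10^{p-1}},$$ which is the probability that the $p$-th digit of $x$ is $d$ when $m$ is chosen uniformly in $\{10^{p-1},\dots,n\}$ and then $x$ uniformly in $\{10^{p-1},\dots,m\}$. *)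

theory Defs
  imports Complex_Main
begin

definition ndigits :: "nat \<Rightarrow> nat" where
  "ndigits x = (LEAST k. x < 10 ^ k)"

text \<open>The p-th decimal digit of x counted from the left (p \<ge> 1, meaningful when x \<ge> 10^(p-1)).\<close>
definition pth_digit :: "nat \<Rightarrow> nat \<Rightarrow> nat" where
  "pth_digit p x = (x div 10 ^ (ndigits x - p)) mod 10"

definition Ncount :: "nat \<Rightarrow> nat \<Rightarrow> nat \<Rightarrow> nat" where
  "Ncount p d m = card {x \<in> {10 ^ (p - 1)..m}. pth_digit p x = d}"

definition Pdig :: "nat \<Rightarrow> nat \<Rightarrow> nat \<Rightarrow> real" where
  "Pdig d n p = (1 / real (n + 1 - 10 ^ (p - 1))) *
     (\<Sum>m = 10 ^ (p - 1)..n. real (Ncount p d m) / real (m + 1 - 10 ^ (p - 1)))"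

end

theory Submission
  imports Defs
begin

lemma nd_eq:
  assumes "k \<ge> 1" "10 ^ (k - 1) \<le> x" "x < (10::nat) ^ k"
  shows "ndigits x = k"
  unfolding ndigits_def
proof (rule Least_equality)
  show "x < 10 ^ k" by fact
next
  fix y assume "x < (10::nat) ^ y"
  show "k \<le> y"
  proof (rule ccontr)
    assume "\<not> k \<le> y"
    then have "y \<le> k - 1" by simp
    then have "(10::nat) ^ y \<le> 10 ^ (k - 1)" by (rule power_increasing) simp
    with assms(2) \<open>x < 10 ^ y\<close> show False by linarith
  qed
qed

lemma nd_ex:
  assumes "(x::nat) \<ge> 1"
  shows "ndigits x \<ge> 1 \<and> 10 ^ (ndigits x - 1) \<le> x \<and> x < 10 ^ ndigits x"
proof -
  have ex: "x < (10::nat) ^ x" by (induction x) auto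
  have lt: "x < 10 ^ ndigits x" unfolding ndigits_def by (rule LeastI[of _ x]) (rule ex)
  have k1: "ndigits x \<ge> 1"
  proof (rule ccontr)
    assume "\<not> ndigits x \<ge> 1" then have "ndigits x = 0" by simp
    with lt assms show False by simp
  qed
  have "\<not> x < 10 ^ (ndigits x - 1)"
  proof
    assume "x < 10 ^ (ndigits x - 1)"
    then have "ndigits x \<le> ndigits x - 1" unfolding ndigits_def by (rule Least_le)
    with k1 show False by simp
  qed
  with lt k1 show ?thesis by simp
qed

lemma Nmono:
  assumes p: "p \<ge> 2" and ab: "a < b" "b \<le> 9"
  shows "Ncount p b m \<le> Ncount p a m"
proof -
  define L where "L = (10::nat) ^ (p - 1)"
  define f where "f x = x - (b - a) * 10 ^ (ndigits x - p)" for x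
  have key: "ndigits (f x) = ndigits x \<and> pth_digit p (f x) = a \<and> L \<le> f x \<and> f x \<le> x
     \<and> x = f x + (b - a) * 10 ^ (ndigits x - p)"
    if x: "L \<le> x" "pth_digit p x = b" for x
  proof -
    have "L \<ge> 1" unfolding L_def by simp
    then obtain k where k: "k = ndigits x" "k \<ge> 1" "10 ^ (k - 1) \<le> x" "x < 10 ^ k"
      using nd_ex[of x] x by auto
    have kp: "k \<ge> p"
    proof (rule ccontr)
      assume "\<not> k \<ge> p" then have "k \<le> p - 1" by simp
      then have "(10::nat) ^ k \<le> L" unfolding L_def by (rule power_increasing) simp
      with k x show False by simp
    qed
    define e where "e = (10::nat) ^ (k - p)"
    define q where "q = x div e"
    have e0: "e > 0" unfolding e_def by simp
    have qb: "q mod 10 = b" using x(2) k unfolding pth_digit_def q_def e_def by simp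
    have "10 ^ (k - 1) = 10 ^ (p - 1) * e" unfolding e_def using kp p
      by (simp add: power_add[symmetric])
    then have "10 ^ (p - 1) * e \<le> x" using k by simp
    then have q1: "10 ^ (p - 1) \<le> q" unfolding q_def using e0
      by (simp add: less_eq_div_iff_mult_less_eq)
    have qdec: "q = 10 * (q div 10) + b" using qb div_mult_mod_eq[of q 10] by linarith
    have "(10::nat) ^ (p - 1) = 10 * 10 ^ (p - 2)"
    proof -
      obtain r where "p = r + 2" using p le_Suc_ex by (metis add.commute)
      then show ?thesis by simp
    qed
    with q1 have qd: "10 ^ (p - 2) \<le> q div 10" by simp
    have xdec: "x = q * e + x mod e" unfolding q_def by simp
    have fx: "f x = (10 * (q div 10) + a) * e + x mod e"
    proof -
      have "f x = x - (b - a) * e" unfolding f_def e_def k(1) by simp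
      also have "\<dots> = (q * e + x mod e) - (b - a) * e" using xdec by simp
      also have "q * e = (10 * (q div 10) + a) * e + (b - a) * e"
        using qdec ab by (metis add.assoc distrib_right le_add_diff_inverse less_imp_le)
      finally show ?thesis by simp
    qed
    have fdiv: "f x div e = 10 * (q div 10) + a" using fx e0 by simp
    have fle: "f x \<le> x" unfolding f_def by simp
    have "10 ^ (p - 1) \<le> 10 * (q div 10) + a" using qd
      \<open>(10::nat) ^ (p - 1) = 10 * 10 ^ (p - 2)\<close> by simp
    then have "10 ^ (p - 1) * e \<le> (10 * (q div 10) + a) * e" by (rule mult_le_mono1)
    then have "10 ^ (p - 1) * e \<le> f x" using fx by linarith
    then have fl: "10 ^ (k - 1) \<le> f x" using \<open>10 ^ (k - 1) = 10 ^ (p - 1) * e\<close> by simp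
    have nf: "ndigits (f x) = k" using nd_eq[OF k(2) fl] fle k(4) by simp
    have "pth_digit p (f x) = a" unfolding pth_digit_def nf
      using fdiv ab unfolding e_def by simp
    moreover have "L \<le> f x" using fl kp unfolding L_def
      by (meson diff_le_mono le_trans one_le_numeral power_increasing)
    moreover have "x = f x + (b - a) * 10 ^ (ndigits x - p)"
    proof -
      have "q mod 10 \<le> q" by (rule mod_less_eq_dividend)
      then have "b - a \<le> q" using qb by linarith
      then have "(b - a) * e \<le> q * e" by (rule mult_le_mono1)
      then have "(b - a) * e \<le> x" using xdec by linarith
      then show ?thesis unfolding f_def e_def k(1) by simp
    qed
    ultimately show ?thesis using nf k fle by simp
  qed
  have "inj_on f {x \<in> {L..m}. pth_digit p x = b}"
  proof (rule inj_onI)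
    fix x y assume "x \<in> {x \<in> {L..m}. pth_digit p x = b}" "y \<in> {x \<in> {L..m}. pth_digit p x = b}"
      "f x = f y"
    then have hx: "L \<le> x" "pth_digit p x = b" and hy: "L \<le> y" "pth_digit p y = b" by auto
    have kx: "ndigits (f x) = ndigits x" "x = f x + (b - a) * 10 ^ (ndigits x - p)" using key[OF hx] by simp_all
    have ky: "ndigits (f y) = ndigits y" "y = f y + (b - a) * 10 ^ (ndigits y - p)" using key[OF hy] by simp_all
    have "ndigits x = ndigits (f x)" using kx(1) by simp
    also have "\<dots> = ndigits (f y)" using \<open>f x = f y\<close> by simp
    also have "\<dots> = ndigits y" using ky(1) by simp
    finally have nd: "ndigits x = ndigits y" .
    have "x = f y + (b - a) * 10 ^ (ndigits y - p)" using kx(2) \<open>f x = f y\<close> nd by simp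
    then show "x = y" using ky(2) by simp
  qed
  moreover have "f ` {x \<in> {L..m}. pth_digit p x = b} \<subseteq> {x \<in> {L..m}. pth_digit p x = a}"
    using key by fastforce
  ultimately show ?thesis unfolding Ncount_def L_def[symmetric]
    by (intro card_inj_on_le) auto
qed

lemma Nstrict:
  assumes p: "p \<ge> 2" and ab: "a < b" "b \<le> 9"
  shows "Ncount p b (10 ^ (p - 1) + a) < Ncount p a (10 ^ (p - 1) + a)"
proof -
  define L where "L = (10::nat) ^ (p - 1)"
  obtain r where r: "p = r + 2" using p le_Suc_ex by (metis add.commute)
  have L10: "L = 10 * 10 ^ (p - 2)" unfolding L_def r by simp
  have Lp: "10 ^ p = 10 * L" unfolding L_def r by simp
  have dig: "pth_digit p x = x - L" if "L \<le> x" "x \<le> L + 9" for x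
  proof -
    have "L \<ge> 10" using L10 by simp
    then have "L + 9 < 10 ^ p" unfolding Lp by linarith
    then have "ndigits x = p" using that p nd_eq[of p x] unfolding L_def by simp
    then have d1: "pth_digit p x = x mod 10" unfolding pth_digit_def by simp
    have "x = (x - L) + 10 * 10 ^ (p - 2)"
      using that L10 by simp
    hence "x mod 10 = ((x - L) + 10 * 10 ^ (p - 2)) mod 10" by simp
    with d1 have "pth_digit p x = ((x - L) + 10 * 10 ^ (p - 2)) mod 10" by simp
    also have "\<dots> = (x - L) mod 10" by (rule mod_mult_self2)
    also have "\<dots> = x - L" using that by simp
    finally show ?thesis .
  qed
  have e: "{x \<in> {L..L + a}. pth_digit p x = b} = {}"
  proof (rule equals0I)
    fix x assume "x \<in> {x \<in> {L..L + a}. pth_digit p x = b}"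
    then have "L \<le> x" "x \<le> L + a" "pth_digit p x = b" by auto
    moreover have "pth_digit p x = x - L" using dig[of x] ab calculation by simp
    ultimately show False using ab by simp
  qed
  have "L + a \<in> {x \<in> {L..L + a}. pth_digit p x = a}" using dig ab by simp
  then have "card {x \<in> {L..L + a}. pth_digit p x = a} > 0"
    by (subst card_gt_0_iff) auto
  then show ?thesis unfolding Ncount_def L_def[symmetric] e by simp
qed

theorem proposition3:
  fixes p n a b :: nat
  assumes "p \<ge> 2" and "n \<ge> 10 ^ (p - 1) + 9"
    and "a \<le> 9" and "b \<le> 9" and "a < b"
  shows "Pdig a n p > Pdig b n p"
proof -
  define L where "L = (10::nat) ^ (p - 1)"
  have "n + 1 - L > 0" using assms(2) unfolding L_def by simp
  then have pos: "real (n + 1 - L) > 0" by simp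
  have "(\<Sum>m = L..n. real (Ncount p b m) / real (m + 1 - L))
      < (\<Sum>m = L..n. real (Ncount p a m) / real (m + 1 - L))"
  proof (rule sum_strict_mono_ex1)
    show "finite {L..n}" by simp
    show "\<forall>m\<in>{L..n}. real (Ncount p b m) / real (m + 1 - L) \<le> real (Ncount p a m) / real (m + 1 - L)"
      using Nmono[OF assms(1) assms(5) assms(4)] by (simp add: divide_right_mono)
    have "L + a \<in> {L..n}" using assms(2,3) unfolding L_def by simp
    moreover have "real (Ncount p b (L + a)) / real (L + a + 1 - L) < real (Ncount p a (L + a)) / real (L + a + 1 - L)"
      using Nstrict[OF assms(1) assms(5) assms(4)] unfolding L_def by (simp add: divide_strict_right_mono)
    ultimately show "\<exists>m\<in>{L..n}. real (Ncount p b m) / real (m + 1 - L) < real (Ncount p a m) / real (m + 1 - L)"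
      by blast
  qed
  then have "(1 / real (n + 1 - L)) * (\<Sum>m = L..n. real (Ncount p b m) / real (m + 1 - L))
      < (1 / real (n + 1 - L)) * (\<Sum>m = L..n. real (Ncount p a m) / real (m + 1 - L))"
    by (rule mult_strict_left_mono) (use pos in simp)
  then show ?thesis unfolding Pdig_def L_def[symmetric] .
qed

end
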